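(* Let $G=(V,E)$ be a graph with arboricity $\alpha$, let $h\le\log\alpha$, and consider Procedure Arboricity Edge-Coloring$(G,h)$. For every $0\le i\le h$, the arboricity $\alpha^{(i)}$ of any graph $G^{(i)}$ computed after $i$ levels of recursion of the invocation of Procedure Oriented Edge-Coloring inside Arboricity Edge-Coloring satisfies $\alpha^{(i)}\le\frac{\alpha}{2^{i-1}}+1$.
   Context: Logarithms are base 2. The arboricity of a graph $H$ is $\max_{S\subseteq V(H),|S|\ge2}\lceil |E(H[S])|/(|S|-1)\rceil$. An oriented degree-splitting of $(H,\mu)$ with discrepancy $\kappa$ is a partition $(E_1,E_2)$ of $E(H)$ such that for every vertex $v$, the numbers of incoming edges of $v$ in $E_1$ and in $E_2$ differ by at most $\kappa$, and likewise for outgoing edges. Procedure Forests-Decomposition Orientation$(G)$: starting from $\mathcal A=V$, repeatedly pick $v\in\mathcal A$ of minimum degree in $G[\mathcal A]$, orient every edge from $v$ to its neighbours in $\mathcal A$, and remove $v$ from $\mathcal A$, until $\mathcal A=\emptyset$ (the resulting orientation has out-degree at most $2\alpha$). Procedure Oriented Edge-Coloring$(H,\mu,h)$: if $h=0$, return a proper $(\Delta(H)+1)$-edge-coloring of $H$ from a base-case subroutine; otherwise compute an oriented degree-splitting $(E_1,E_2)$ of $(H,\mu)$ with discrepancy at most 1, recursively call Oriented Edge-Coloring$(H_1,\mu,h-1)$ and Oriented Edge-Coloring$(H_2,\mu,h-1)$ on $H_1=(V,E_1)$, $H_2=(V,E_2)$ (orientation induced by $\mu$), and merge the colorings using disjoint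 palettes. Procedure Arboricity Edge-Coloring$(G,h)$: compute $\mu=$ Forests-Decomposition Orientation$(G)$ and return Oriented Edge-Coloring$(G,\mu,h)$. $G^{(0)}=G$, and a graph computed after $i$ levels of recursion is any $H_1$ or $H_2$ produced from a graph computed after $i-1$ levels. *)

theory Defs
  imports Complex_Main
begin

definition graph :: "'a set \<Rightarrow> 'a set set \<Rightarrow> bool" where
  "graph V E \<longleftrightarrow> finite V \<and> (\<forall>e\<in>E. e \<subseteq> V \<and> card e = 2)"

definition arboricity :: "'a set \<Rightarrow> 'a set set \<Rightarrow> nat" where
  "arboricity V E = Max (insert 0
     {nat \<lceil>real (card {e\<in>E. e \<subseteq> S}) / real (card S - 1)\<rceil> | S. S \<subseteq> V \<and> card S \<ge> 2})"

definition deg_in :: "'a set set \<Rightarrow> 'a set \<Rightarrow> 'a \<Rightarrow> nat" where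
  "deg_in E A v = card {u\<in>A. {v, u} \<in> E}"

text \<open>A run of Procedure Forests-Decomposition Orientation: the sequence vs of removed
  vertices, each of minimum degree in G[A] at the time of removal.\<close>
definition fd_run :: "'a set \<Rightarrow> 'a set set \<Rightarrow> 'a list \<Rightarrow> bool" where
  "fd_run V E vs \<longleftrightarrow> distinct vs \<and> set vs = V \<and>
     (\<forall>k<length vs. let A = V - set (take k vs) in
        \<forall>w\<in>A. deg_in E A (vs ! k) \<le> deg_in E A w)"

definition fd_orientation :: "'a set set \<Rightarrow> 'a list \<Rightarrow> ('a \<times> 'a) set" where
  "fd_orientation E vs = {(vs ! j, vs ! k) | j k. j < k \<and> k < length vs \<and> {vs ! j, vs ! k} \<in> E}"

definition in_deg :: "('a \<times> 'a) set \<Rightarrow> 'a set set \<Rightarrow> 'a \<Rightarrow> nat" where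
  "in_deg \<mu> F v = card {u. (u, v) \<in> \<mu> \<and> {u, v} \<in> F}"

definition out_deg :: "('a \<times> 'a) set \<Rightarrow> 'a set set \<Rightarrow> 'a \<Rightarrow> nat" where
  "out_deg \<mu> F v = card {u. (v, u) \<in> \<mu> \<and> {v, u} \<in> F}"

definition oriented_splitting ::
  "'a set \<Rightarrow> 'a set set \<Rightarrow> ('a \<times> 'a) set \<Rightarrow> 'a set set \<Rightarrow> 'a set set \<Rightarrow> nat \<Rightarrow> bool" where
  "oriented_splitting V H \<mu> E1 E2 \<kappa> \<longleftrightarrow> E1 \<union> E2 = H \<and> E1 \<inter> E2 = {} \<and>
     (\<forall>v\<in>V. \<bar>int (in_deg \<mu> E1 v) - int (in_deg \<mu> E2 v)\<bar> \<le> int \<kappa> \<and>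
             \<bar>int (out_deg \<mu> E1 v) - int (out_deg \<mu> E2 v)\<bar> \<le> int \<kappa>)"

text \<open>Edge sets of graphs computed after i levels of recursion of Oriented Edge-Coloring
  (all on vertex set V, orientation induced by mu).\<close>
inductive level_graph :: "'a set \<Rightarrow> 'a set set \<Rightarrow> ('a \<times> 'a) set \<Rightarrow> nat \<Rightarrow> 'a set set \<Rightarrow> bool"
  for V E \<mu> where
  base: "level_graph V E \<mu> 0 E"
| left: "level_graph V E \<mu> i H \<Longrightarrow> oriented_splitting V H \<mu> E1 E2 1 \<Longrightarrow>
         level_graph V E \<mu> (Suc i) E1"
| right: "level_graph V E \<mu> i H \<Longrightarrow> oriented_splitting V H \<mu> E1 E2 1 \<Longrightarrow>
         level_graph V E \<mu> (Suc i) E2"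

end

theory Submission
  imports Defs
begin

lemma arb_set_finite:
  assumes "finite V"
  shows "finite {nat \<lceil>real (card {e\<in>E. e \<subseteq> S}) / real (card S - 1)\<rceil> | S. S \<subseteq> V \<and> card S \<ge> 2}"
proof -
  have "finite {S. S \<subseteq> V \<and> card S \<ge> 2}" using assms by simp
  then show ?thesis by (rule finite_image_set)
qed

lemma edges_le_arb:
  assumes "graph V E" "S \<subseteq> V"
  shows "card {e\<in>E. e \<subseteq> S} \<le> arboricity V E * (card S - 1)"
proof (cases "card S \<ge> 2")
  case True
  have fV: "finite V" using assms(1) by (simp add: graph_def)
  let ?c = "card {e\<in>E. e \<subseteq> S}"
  let ?s = "card S - 1"
  have "nat \<lceil>real ?c / real ?s\<rceil> \<le> arboricity V E"
    unfolding arboricity_def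
    apply (rule Max_ge)
    using arb_set_finite[OF fV, of E] apply simp
    using True assms(2) by blast
  then have "\<lceil>real ?c / real ?s\<rceil> \<le> int (arboricity V E)" by linarith
  then have "real ?c / real ?s \<le> real_of_int (int (arboricity V E))"
    using ceiling_le_iff by blast
  then have "real ?c / real ?s \<le> real (arboricity V E)" by simp
  moreover have "real ?s > 0" using True by simp
  ultimately have "real ?c \<le> real (arboricity V E) * real ?s"
    by (simp add: divide_le_eq)
  then show ?thesis by (metis of_nat_le_iff of_nat_mult)
next
  case False
  have "{e\<in>E. e \<subseteq> S} = {}"
  proof (rule ccontr)
    assume "{e\<in>E. e \<subseteq> S} \<noteq> {}"
    then obtain e where "e \<in> E" "e \<subseteq> S" by auto
    moreover have "finite S" using assms by (meson graph_def finite_subset)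
    ultimately have "card e \<le> card S" by (simp add: card_mono)
    moreover have "card e = 2" using \<open>e \<in> E\<close> assms(1) by (simp add: graph_def)
    ultimately show False using False by simp
  qed
  then show ?thesis by (metis card.empty zero_le)
qed

lemma fd_orient_mem:
  assumes "distinct vs" "k < length vs" "(vs ! k, u) \<in> fd_orientation E vs"
  shows "\<exists>k'. k < k' \<and> k' < length vs \<and> u = vs ! k' \<and> {vs ! k, u} \<in> E"
proof -
  from assms(3) obtain j k' where jk: "vs ! k = vs ! j" "u = vs ! k'" "j < k'" "k' < length vs"
    "{vs ! j, vs ! k'} \<in> E"
    unfolding fd_orientation_def by auto
  have "j < length vs" using jk by linarith
  then have "j = k" using jk(1) assms(1,2) nth_eq_iff_index_eq by metis
  then show ?thesis using jk by auto
qed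


lemma nth_notin_take:
  assumes "distinct vs" "k \<le> k'" "k' < length vs"
  shows "vs ! k' \<notin> set (take k vs)"
proof
  assume "vs ! k' \<in> set (take k vs)"
  then obtain j where "j < length (take k vs)" "take k vs ! j = vs ! k'"
    by (auto simp: in_set_conv_nth)
  then have "j < k" "vs ! j = vs ! k'" by auto
  moreover have "j < length vs" using \<open>j < k\<close> assms(2,3) by linarith
  ultimately have "j = k'" using assms(1,3) nth_eq_iff_index_eq by blast
  then show False using \<open>j < k\<close> assms(2) by simp
qed

lemma finite_edges:
  assumes "graph V E" shows "finite E"
proof -
  have "E \<subseteq> Pow V" using assms by (auto simp: graph_def)
  moreover have "finite V" using assms by (simp add: graph_def)
  ultimately show ?thesis by (meson finite_Pow_iff finite_subset)
qed

lemma pairs_card: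
  assumes "card e = 2"
  shows "finite {p. {fst p, snd p} = e} \<and> card {p. {fst p, snd p} = e} \<le> 2"
proof -
  from card_2_iff[THEN iffD1, OF assms] obtain x y where e: "e = {x, y}" "x \<noteq> y" by blast
  have "{p. {fst p, snd p} = e} = {(x, y), (y, x)}"
  proof (rule set_eqI)
    fix p :: "'a \<times> 'a"
    obtain a b where p: "p = (a, b)" by (cases p)
    have "({a, b} = {x, y}) = (a = x \<and> b = y \<or> a = y \<and> b = x)" by (rule doubleton_eq_iff)
    moreover have "p \<in> {p. {fst p, snd p} = e} \<longleftrightarrow> {a, b} = {x, y}" using e(1) p by simp
    moreover have "p \<in> {(x, y), (y, x)} \<longleftrightarrow> (a = x \<and> b = y \<or> a = y \<and> b = x)" using p by simp
    ultimately show "p \<in> {p. {fst p, snd p} = e} \<longleftrightarrow> p \<in> {(x, y), (y, x)}"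
      by blast
  qed
  moreover have "card {(x, y), (y, x)} = 2" using e(2) by simp
  moreover have "finite {(x, y), (y, x)}" by simp
  ultimately show ?thesis by (metis order_refl)
qed

lemma handshake_le:
  assumes "graph V E" "A \<subseteq> V"
  shows "(\<Sum>w\<in>A. deg_in E A w) \<le> 2 * card {e\<in>E. e \<subseteq> A}"
proof -
  have fV: "finite V" using assms by (simp add: graph_def)
  have fA: "finite A" using assms fV finite_subset by blast
  have fE: "finite {e\<in>E. e \<subseteq> A}" using finite_edges[OF assms(1)] by simp
  have "(\<Sum>w\<in>A. deg_in E A w) = card (SIGMA w:A. {u\<in>A. {w,u}\<in>E})"
    unfolding deg_in_def using fA by (subst card_SigmaI) auto
  also have "(SIGMA w:A. {u\<in>A. {w,u}\<in>E}) \<subseteq> (\<Union>e\<in>{e\<in>E. e \<subseteq> A}. {p. {fst p, snd p} = e})"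
  proof
    fix p assume "p \<in> (SIGMA w:A. {u\<in>A. {w,u}\<in>E})"
    then obtain w u where "p = (w,u)" "w \<in> A" "u \<in> A" "{w,u} \<in> E" by blast
    then show "p \<in> (\<Union>e\<in>{e\<in>E. e \<subseteq> A}. {p. {fst p, snd p} = e})" by auto
  qed
  then have "card (SIGMA w:A. {u\<in>A. {w,u}\<in>E}) \<le> card (\<Union>e\<in>{e\<in>E. e \<subseteq> A}. {p. {fst p, snd p} = e})"
    apply (rule card_mono[rotated])
    apply (rule finite_UN_I[OF fE])
    using pairs_card assms(1) unfolding graph_def by blast
  also have "\<dots> \<le> (\<Sum>e\<in>{e\<in>E. e \<subseteq> A}. card {p. {fst p, snd p} = e})"
    by (rule card_UN_le[OF fE])
  also have "\<dots> \<le> (\<Sum>e\<in>{e\<in>E. e \<subseteq> A}. 2)"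
    apply (rule sum_mono)
    using pairs_card assms(1) unfolding graph_def by blast
  also have "\<dots> = 2 * card {e\<in>E. e \<subseteq> A}" by simp
  finally show ?thesis .
qed

lemma out_deg_init:
  assumes "graph V E" "fd_run V E vs" "v \<in> V"
  shows "out_deg (fd_orientation E vs) E v \<le> 2 * arboricity V E"
proof -
  have dist: "distinct vs" and setv: "set vs = V" using assms(2) by (auto simp: fd_run_def)
  obtain k where k: "k < length vs" "vs ! k = v" using assms(3) setv by (metis in_set_conv_nth)
  define A where "A = V - set (take k vs)"
  have AV: "A \<subseteq> V" by (auto simp: A_def)
  have fV: "finite V" using assms by (simp add: graph_def)
  have fA: "finite A" using AV fV finite_subset by blast
  have vA: "v \<in> A" unfolding A_def using k nth_notin_take[OF dist order_refl k(1)] assms(3) by simp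
  have "{u. (v,u) \<in> fd_orientation E vs \<and> {v,u} \<in> E} \<subseteq> {u\<in>A. {v,u}\<in>E}"
  proof
    fix u assume "u \<in> {u. (v,u) \<in> fd_orientation E vs \<and> {v,u} \<in> E}"
    then obtain k' where "k < k'" "k' < length vs" "u = vs ! k'" "{v,u}\<in>E"
      using fd_orient_mem[OF dist k(1)] k(2) by blast
    then show "u \<in> {u\<in>A. {v,u}\<in>E}"
      unfolding A_def using nth_notin_take[OF dist, of k k'] setv by auto
  qed
  then have d1: "out_deg (fd_orientation E vs) E v \<le> deg_in E A v"
    unfolding out_deg_def deg_in_def using fA by (simp add: card_mono)
  have mind: "\<forall>w\<in>A. deg_in E A v \<le> deg_in E A w"
    using assms(2) k unfolding fd_run_def A_def Let_def by blast
  have "card A * deg_in E A v \<le> (\<Sum>w\<in>A. deg_in E A w)"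
    using sum_mono[of A "\<lambda>_. deg_in E A v" "deg_in E A"] mind by simp
  also have "\<dots> \<le> 2 * card {e\<in>E. e \<subseteq> A}" by (rule handshake_le[OF assms(1) AV])
  also have "\<dots> \<le> 2 * (arboricity V E * (card A - 1))"
    using edges_le_arb[OF assms(1) AV] by simp
  also have "\<dots> \<le> card A * (2 * arboricity V E)" by (simp add: algebra_simps)
  finally have "card A * deg_in E A v \<le> card A * (2 * arboricity V E)" .
  moreover have "card A > 0" using vA fA card_gt_0_iff by blast
  ultimately have "deg_in E A v \<le> 2 * arboricity V E" by simp
  then show ?thesis using d1 by simp
qed


lemma sub_count:
  assumes "graph V E" "H \<subseteq> E" "distinct vs" "set vs = V"
    and deg: "\<forall>v\<in>V. out_deg (fd_orientation E vs) H v \<le> d"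
    and S: "S \<subseteq> V" "card S \<ge> 2"
  shows "card {e\<in>H. e \<subseteq> S} \<le> d * (card S - 1)"
proof -
  let ?\<mu> = "fd_orientation E vs"
  have fV: "finite V" using assms by (simp add: graph_def)
  have fS: "finite S" using S fV finite_subset by blast
  define K where "K = {k. k < length vs \<and> vs ! k \<in> S}"
  have fK: "finite K" unfolding K_def by simp
  have "S \<noteq> {}" using S by auto
  then obtain s0 where "s0 \<in> S" by blast
  then obtain k0 where "k0 < length vs" "vs ! k0 = s0" using S assms(4) by (metis in_set_conv_nth subsetD)
  then have Kne: "K \<noteq> {}" unfolding K_def using \<open>s0 \<in> S\<close> by blast
  define km where "km = Max K"
  have kmK: "km \<in> K" unfolding km_def using fK Kne by simp
  define lst where "lst = vs ! km"
  have lstS: "lst \<in> S" using kmK unfolding K_def lst_def by simp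
  have noout: "\<And>u. u \<in> S \<Longrightarrow> (lst, u) \<notin> ?\<mu>"
  proof
    fix u assume "u \<in> S" "(lst, u) \<in> ?\<mu>"
    then obtain k' where "km < k'" "k' < length vs" "u = vs ! k'"
      using fd_orient_mem[OF assms(3), of km u E] kmK unfolding K_def lst_def by auto
    then have "k' \<in> K" using \<open>u \<in> S\<close> unfolding K_def by simp
    then have "k' \<le> km" unfolding km_def using fK by simp
    then show False using \<open>km < k'\<close> by simp
  qed
  define F where "F = (\<lambda>v. {u. (v, u) \<in> ?\<mu> \<and> {v, u} \<in> H})"
  have one: "{a, b} \<in> (\<Union>v\<in>S - {lst}. (\<lambda>u. {v, u}) ` F v)"
    if "a = vs ! j" "b = vs ! k" "j < k" "k < length vs" "{a, b} \<in> H" "{a, b} \<subseteq> S" for a b j k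
  proof -
    have "(a, b) \<in> ?\<mu>" unfolding fd_orientation_def using that assms(2) by blast
    then have "a \<noteq> lst" using noout that(6) by auto
    moreover have "b \<in> F a" unfolding F_def using \<open>(a, b) \<in> ?\<mu>\<close> that(5) by simp
    ultimately show ?thesis using that(6) by blast
  qed
  have cover: "{e\<in>H. e \<subseteq> S} \<subseteq> (\<Union>v\<in>S - {lst}. (\<lambda>u. {v, u}) ` F v)"
  proof
    fix e assume eH: "e \<in> {e\<in>H. e \<subseteq> S}"
    then have "card e = 2" using assms(1,2) unfolding graph_def by auto
    from card_2_iff[THEN iffD1, OF this] obtain a b where ab: "e = {a, b}" "a \<noteq> b" by blast
    have "a \<in> V" "b \<in> V" using eH ab S by auto
    then obtain j k where jk: "j < length vs" "vs ! j = a" "k < length vs" "vs ! k = b"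
      using assms(4) by (metis in_set_conv_nth)
    have "j \<noteq> k" using jk ab by auto
    then consider "j < k" | "k < j" by linarith
    then show "e \<in> (\<Union>v\<in>S - {lst}. (\<lambda>u. {v, u}) ` F v)"
    proof cases
      case 1 then show ?thesis using one[of a j b k] jk eH ab by auto
    next
      case 2
      have "{b, a} \<in> (\<Union>v\<in>S - {lst}. (\<lambda>u. {v, u}) ` F v)"
        using one[of b k a j] jk eH ab 2 by (auto simp: insert_commute)
      then show ?thesis using ab by (simp add: insert_commute)
    qed
  qed
  have fF: "\<And>v. finite (F v)"
  proof -
    fix v
    have "F v \<subseteq> V"
    proof
      fix u assume "u \<in> F v"
      then have "{v, u} \<in> E" unfolding F_def using assms(2) by blast
      then show "u \<in> V" using assms(1) unfolding graph_def by blast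
    qed
    then show "finite (F v)" using fV finite_subset by blast
  qed
  have "card {e\<in>H. e \<subseteq> S} \<le> card (\<Union>v\<in>S - {lst}. (\<lambda>u. {v, u}) ` F v)"
    apply (rule card_mono[OF _ cover])
    using fS fF by blast
  also have "\<dots> \<le> (\<Sum>v\<in>S - {lst}. card ((\<lambda>u. {v, u}) ` F v))"
    using fS by (intro card_UN_le) simp
  also have "\<dots> \<le> (\<Sum>v\<in>S - {lst}. d)"
  proof (rule sum_mono)
    fix v assume "v \<in> S - {lst}"
    then have "out_deg ?\<mu> H v \<le> d" using deg S by auto
    moreover have "card ((\<lambda>u. {v, u}) ` F v) \<le> card (F v)" by (rule card_image_le[OF fF])
    ultimately show "card ((\<lambda>u. {v, u}) ` F v) \<le> d" unfolding F_def out_deg_def by simp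
  qed
  also have "\<dots> = d * (card S - 1)" using lstS fS by simp
  finally show ?thesis .
qed

lemma arb_le_outdeg:
  assumes "graph V E" "H \<subseteq> E" "distinct vs" "set vs = V"
    and deg: "\<forall>v\<in>V. out_deg (fd_orientation E vs) H v \<le> d"
  shows "arboricity V H \<le> d"
proof -
  have fV: "finite V" using assms by (simp add: graph_def)
  have key: "nat \<lceil>real (card {e\<in>H. e \<subseteq> S}) / real (card S - 1)\<rceil> \<le> d"
    if "S \<subseteq> V" "card S \<ge> 2" for S
  proof -
    have c: "card {e\<in>H. e \<subseteq> S} \<le> d * (card S - 1)" by (rule sub_count[OF assms that])
    have pos: "real (card S - 1) > 0" using that by simp
    have "real (card {e\<in>H. e \<subseteq> S}) \<le> real d * real (card S - 1)"
      using c by (metis of_nat_le_iff of_nat_mult)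
    then have "real (card {e\<in>H. e \<subseteq> S}) / real (card S - 1) \<le> real d"
      using pos by (simp add: divide_le_eq)
    then have "real (card {e\<in>H. e \<subseteq> S}) / real (card S - 1) \<le> real_of_int (int d)" by simp
    then have "\<lceil>real (card {e\<in>H. e \<subseteq> S}) / real (card S - 1)\<rceil> \<le> int d"
      using ceiling_le_iff by blast
    then show ?thesis by linarith
  qed
  show ?thesis
    unfolding arboricity_def
    apply (subst Max_le_iff)
    using arb_set_finite[OF fV, of H] key by auto
qed


lemma split_sum:
  assumes "graph V E" "H \<subseteq> E" "oriented_splitting V H \<mu> E1 E2 1" "v \<in> V"
  shows "E1 \<subseteq> H \<and> E2 \<subseteq> H \<and> out_deg \<mu> E1 v + out_deg \<mu> E2 v = out_deg \<mu> H v \<and>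
         \<bar>int (out_deg \<mu> E1 v) - int (out_deg \<mu> E2 v)\<bar> \<le> 1"
proof -
  have U: "E1 \<union> E2 = H" and D: "E1 \<inter> E2 = {}"
    and ab: "\<bar>int (out_deg \<mu> E1 v) - int (out_deg \<mu> E2 v)\<bar> \<le> 1"
    using assms(3,4) unfolding oriented_splitting_def by auto
  define F where "F = (\<lambda>X. {u. (v, u) \<in> \<mu> \<and> {v, u} \<in> X})"
  have fV: "finite V" using assms by (simp add: graph_def)
  have FH: "F H \<subseteq> V"
  proof
    fix u assume "u \<in> F H"
    then have "{v, u} \<in> E" unfolding F_def using assms(2) by blast
    then show "u \<in> V" using assms(1) unfolding graph_def by blast
  qed
  have U': "H = E1 \<union> E2" using U by simp
  have D': "\<forall>x. x \<in> E1 \<longrightarrow> x \<notin> E2" using D by blast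
  have "F E1 \<subseteq> F H" "F E2 \<subseteq> F H" unfolding F_def U' by auto
  moreover have fFH: "finite (F H)" using FH fV by (rule finite_subset)
  ultimately have f1: "finite (F E1)" and f2: "finite (F E2)" by (auto intro: finite_subset[OF _ fFH])
  have "F H = F E1 \<union> F E2" unfolding F_def U' by auto
  moreover have "F E1 \<inter> F E2 = {}" unfolding F_def using D' by auto
  ultimately have "card (F H) = card (F E1) + card (F E2)" using card_Un_disjoint[OF f1 f2] by simp
  then show ?thesis using U ab unfolding out_deg_def F_def by auto
qed

lemma step_real:
  fixes a x D :: real and i :: nat
  assumes "a * 2 \<le> x + 1" "x * 2 ^ i \<le> D + 2 ^ i - 1"
  shows "a * 2 ^ Suc i \<le> D + 2 ^ Suc i - 1"
proof -
  have "a * 2 ^ Suc i = (a * 2) * 2 ^ i" by simp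
  also have "\<dots> \<le> (x + 1) * 2 ^ i" by (rule mult_right_mono[OF assms(1)]) simp
  also have "\<dots> = x * 2 ^ i + 2 ^ i" by (simp add: algebra_simps)
  finally show ?thesis using assms(2) by simp
qed

lemma level_bound:
  assumes "graph V E" "level_graph V E \<mu> i H" "\<forall>v\<in>V. out_deg \<mu> E v \<le> D"
  shows "H \<subseteq> E \<and> (\<forall>v\<in>V. real (out_deg \<mu> H v) * 2 ^ i \<le> real D + 2 ^ i - 1)"
  using assms(2)
proof (induction rule: level_graph.induct)
  case base
  then show ?case using assms(3) by simp
next
  case (left i H E1 E2)
  have "E1 \<subseteq> E" using left(2) left(3) unfolding oriented_splitting_def by blast
  moreover have "\<forall>v\<in>V. real (out_deg \<mu> E1 v) * 2 ^ Suc i \<le> real D + 2 ^ Suc i - 1"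
  proof
    fix v assume v: "v \<in> V"
    have s: "out_deg \<mu> E1 v + out_deg \<mu> E2 v = out_deg \<mu> H v"
      "\<bar>int (out_deg \<mu> E1 v) - int (out_deg \<mu> E2 v)\<bar> \<le> 1"
      using split_sum[OF assms(1) _ left(2) v] left(3) by auto
    then have "real (out_deg \<mu> E1 v) * 2 \<le> real (out_deg \<mu> H v) + 1" by linarith
    then show "real (out_deg \<mu> E1 v) * 2 ^ Suc i \<le> real D + 2 ^ Suc i - 1"
      using step_real left(3) v by blast
  qed
  ultimately show ?case by blast
next
  case (right i H E1 E2)
  have "E2 \<subseteq> E" using right(2) right(3) unfolding oriented_splitting_def by blast
  moreover have "\<forall>v\<in>V. real (out_deg \<mu> E2 v) * 2 ^ Suc i \<le> real D + 2 ^ Suc i - 1"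
  proof
    fix v assume v: "v \<in> V"
    have s: "out_deg \<mu> E1 v + out_deg \<mu> E2 v = out_deg \<mu> H v"
      "\<bar>int (out_deg \<mu> E1 v) - int (out_deg \<mu> E2 v)\<bar> \<le> 1"
      using split_sum[OF assms(1) _ right(2) v] right(3) by auto
    then have "real (out_deg \<mu> E2 v) * 2 \<le> real (out_deg \<mu> H v) + 1" by linarith
    then show "real (out_deg \<mu> E2 v) * 2 ^ Suc i \<le> real D + 2 ^ Suc i - 1"
      using step_real right(3) v by blast
  qed
  ultimately show ?case by blast
qed


theorem lemma4p10:
  fixes V :: "'a set" and E :: "'a set set" and vs :: "'a list" and h i :: nat and H :: "'a set set"
  assumes "graph V E"
    and "real h \<le> log 2 (real (arboricity V E))"
    and "fd_run V E vs"
    and "i \<le> h"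
    and "level_graph V E (fd_orientation E vs) i H"
  shows "real (arboricity V H) \<le> real (arboricity V E) / 2 powr (real i - 1) + 1"
proof -
  let ?\<mu> = "fd_orientation E vs"
  let ?a = "arboricity V E"
  have dist: "distinct vs" and setv: "set vs = V" using assms(3) by (auto simp: fd_run_def)
  have D: "\<forall>v\<in>V. out_deg ?\<mu> E v \<le> 2 * ?a" using out_deg_init[OF assms(1,3)] by blast
  have lb: "H \<subseteq> E \<and> (\<forall>v\<in>V. real (out_deg ?\<mu> H v) * 2 ^ i \<le> real (2 * ?a) + 2 ^ i - 1)"
    by (rule level_bound[OF assms(1,5) D])
  define r :: real where "r = (real (2 * ?a) + 2 ^ i - 1) / 2 ^ i"
  have p: "(2::real) ^ i \<ge> 1" by simp
  have "real (2 * ?a) + 2 ^ i - 1 \<ge> 0" using p of_nat_0_le_iff[of "2 * ?a"] by linarith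
  then have r0: "r \<ge> 0" unfolding r_def by simp
  have "\<forall>v\<in>V. out_deg ?\<mu> H v \<le> nat \<lfloor>r\<rfloor>"
  proof
    fix v assume "v \<in> V"
    then have "real (out_deg ?\<mu> H v) * 2 ^ i \<le> real (2 * ?a) + 2 ^ i - 1" using lb by blast
    then have "real (out_deg ?\<mu> H v) \<le> r" unfolding r_def using p by (simp add: le_divide_eq)
    then have "int (out_deg ?\<mu> H v) \<le> \<lfloor>r\<rfloor>" by (simp add: le_floor_iff)
    then show "out_deg ?\<mu> H v \<le> nat \<lfloor>r\<rfloor>" by linarith
  qed
  then have "arboricity V H \<le> nat \<lfloor>r\<rfloor>"
    using arb_le_outdeg[OF assms(1) _ dist setv] lb by blast
  then have "real (arboricity V H) \<le> real (nat \<lfloor>r\<rfloor>)" by simp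
  also have "\<dots> = real_of_int \<lfloor>r\<rfloor>" using r0 by simp
  also have "\<dots> \<le> r" by simp
  also have "r \<le> real (2 * ?a) / 2 ^ i + 1"
    unfolding r_def using p by (simp add: divide_simps)
  also have "real (2 * ?a) / 2 ^ i = real ?a / 2 powr (real i - 1)"
  proof -
    have q: "(2::real) powr (real i - 1) = 2 ^ i / 2"
      by (simp add: powr_diff powr_realpow)
    show ?thesis unfolding q by (simp add: field_simps)
  qed
  finally show ?thesis .
qed

end
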